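(* Let $(V,E,c,p)$ be a PCSTP instance with potential terminals $T_p=\{t_1,\dots,t_s\}$ and let $(V',A',T',c',r')$ be the SAP obtained from it by Transformation 1 (see context), with $M=\sum_{t\in T_p}p(t)$. Let $\tilde{\mathcal U}\subseteq\{U\subset V': r'\notin U,\ U\cap T'\neq\emptyset\}$ and consider the LP $$\min\ c'^Tx-M\quad\text{s.t.}\quad x(\delta^-(U))\ge 1\ \ (U\in\tilde{\mathcal U}),\qquad 0\le x(a)\le 1\ \ (a\in A').$$ Let $\tilde L$ be its optimal value, let $\pi\ge0$ be an optimal dual solution for the constraints indexed by $\tilde{\mathcal U}$, and let $\tilde c(a):=c'(a)-\sum_{U\in\tilde{\mathcal U}:\,a\in\delta^-(U)}\pi_U$ be the reduced costs. Let $B$ be an upper bound on the cost $C$ of an optimal solution of the PCSTP instance. Let $t_i\in T_p$ and let $\bar T_i\subseteq T_p$ be such that, for every optimal solution $S$ of the PCSTP instance, $V(S)\cap\bar T_i\neq\emptyset$ implies $t_i\in V(S)$. If $$\sum_{j:\ t_j\in\bar T_i}\tilde c\big((v_0',t_j')\big)+\tilde L> B,$$ then $t_i$ is contained in every optimal solution of the PCSTP instance.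
   Context: A PCSTP instance $(V,E,c,p)$: finite undirected connected graph, $c:E\to\mathbb{Q}_{>0}$, $p:V\to\mathbb{Q}_{\ge0}$; for a tree $S$ (connected acyclic subgraph with at least one vertex) $C(S):=\sum_{e\in E(S)}c(e)+\sum_{v\in V\setminus V(S)}p(v)$; optimal solutions minimize $C$; $T_p:=\{v:p(v)>0\}$. A Steiner arborescence problem (SAP) $(V',A',T',c',r')$: digraph $(V',A')$, costs $c'\ge0$, terminals $T'$, root $r'\in T'$; for $U\subseteq V'$, $\delta^-(U)$ is the set of arcs entering $U$, and $x(F):=\sum_{a\in F}x(a)$. Transformation 1 (PCSTP to SAP): set $V':=V$, $A':=\{(v,w),(w,v):\{v,w\}\in E\}$ with $c'((v,w)):=c(\{v,w\})$; $M:=\sum_{t\in T_p}p(t)$; add new vertices $r'$ and $v_0'$; for each $i=1,\dots,s$: add arc $(r',t_i)$ of cost $M$, add a new vertex $t_i'$, add arcs $(t_i,v_0')$ and $(t_i,t_i')$ of cost $0$, and add arc $(v_0',t_i')$ of cost $p(t_i)$. Terminals $T':=\{t_1',\dots,t_s'\}\cup\{r'\}$, root $r'$. *)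

theory Defs
  imports Complex_Main
begin

definition pcstp_instance ::
  "'v set \<Rightarrow> 'v set set \<Rightarrow> ('v set \<Rightarrow> real) \<Rightarrow> ('v \<Rightarrow> real) \<Rightarrow> bool" where
  "pcstp_instance V E c p \<longleftrightarrow>
     finite V \<and> V \<noteq> {} \<and>
     (\<forall>e\<in>E. \<exists>v w. v \<in> V \<and> w \<in> V \<and> v \<noteq> w \<and> e = {v, w}) \<and>
     (\<forall>u\<in>V. \<forall>w\<in>V. (u, w) \<in> {(a, b). {a, b} \<in> E}\<^sup>*) \<and>
     (\<forall>e\<in>E. c e \<in> \<rat> \<and> c e > 0) \<and>
     (\<forall>v\<in>V. p v \<in> \<rat> \<and> p v \<ge> 0)"

definition adj :: "'v set set \<Rightarrow> ('v \<times> 'v) set" where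
  "adj ES = {(a, b). {a, b} \<in> ES}"

definition connected_sub :: "'v set \<Rightarrow> 'v set set \<Rightarrow> bool" where
  "connected_sub VS ES \<longleftrightarrow> (\<forall>u\<in>VS. \<forall>w\<in>VS. (u, w) \<in> (adj ES)\<^sup>*)"

definition has_cycle :: "'v set set \<Rightarrow> bool" where
  "has_cycle ES \<longleftrightarrow> (\<exists>cs. length cs \<ge> 3 \<and> distinct cs \<and>
      (\<forall>i < length cs. {cs ! i, cs ! ((i + 1) mod length cs)} \<in> ES))"

definition is_tree :: "'v set \<Rightarrow> 'v set set \<Rightarrow> 'v set \<Rightarrow> 'v set set \<Rightarrow> bool" where
  "is_tree V E VS ES \<longleftrightarrow> VS \<noteq> {} \<and> VS \<subseteq> V \<and> ES \<subseteq> E \<and> (\<forall>e\<in>ES. e \<subseteq> VS) \<and>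
     connected_sub VS ES \<and> \<not> has_cycle ES"

definition pcst_cost ::
  "'v set \<Rightarrow> ('v set \<Rightarrow> real) \<Rightarrow> ('v \<Rightarrow> real) \<Rightarrow> 'v set \<Rightarrow> 'v set set \<Rightarrow> real" where
  "pcst_cost V c p VS ES = (\<Sum>e\<in>ES. c e) + (\<Sum>v\<in>V - VS. p v)"

definition pcst_optimal ::
  "'v set \<Rightarrow> 'v set set \<Rightarrow> ('v set \<Rightarrow> real) \<Rightarrow> ('v \<Rightarrow> real) \<Rightarrow> 'v set \<Rightarrow> 'v set set \<Rightarrow> bool" where
  "pcst_optimal V E c p VS ES \<longleftrightarrow> is_tree V E VS ES \<and>
     (\<forall>VS' ES'. is_tree V E VS' ES' \<longrightarrow> pcst_cost V c p VS ES \<le> pcst_cost V c p VS' ES')"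

definition Tp :: "'v set \<Rightarrow> ('v \<Rightarrow> real) \<Rightarrow> 'v set" where
  "Tp V p = {v \<in> V. p v > 0}"

definition bigM :: "'v set \<Rightarrow> ('v \<Rightarrow> real) \<Rightarrow> real" where
  "bigM V p = (\<Sum>t\<in>Tp V p. p t)"

text \<open>Vertices of the SAP: original vertices, the new root r', the new vertex v0',
  and a copy t' for every potential terminal t.\<close>
datatype 'v sap_node = Orig 'v | Root | V0 | Copy 'v

definition sap_nodes :: "'v set \<Rightarrow> ('v \<Rightarrow> real) \<Rightarrow> 'v sap_node set" where
  "sap_nodes V p = Orig ` V \<union> {Root, V0} \<union> Copy ` Tp V p"

definition sap_arcs ::
  "'v set \<Rightarrow> 'v set set \<Rightarrow> ('v \<Rightarrow> real) \<Rightarrow> ('v sap_node \<times> 'v sap_node) set" where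
  "sap_arcs V E p =
     {(Orig v, Orig w) | v w. {v, w} \<in> E}
     \<union> {(Root, Orig t) | t. t \<in> Tp V p}
     \<union> {(Orig t, V0) | t. t \<in> Tp V p}
     \<union> {(Orig t, Copy t) | t. t \<in> Tp V p}
     \<union> {(V0, Copy t) | t. t \<in> Tp V p}"

definition sap_terminals :: "'v set \<Rightarrow> ('v \<Rightarrow> real) \<Rightarrow> 'v sap_node set" where
  "sap_terminals V p = Copy ` Tp V p \<union> {Root}"

fun sap_cost_aux ::
  "('v set \<Rightarrow> real) \<Rightarrow> ('v \<Rightarrow> real) \<Rightarrow> real \<Rightarrow> 'v sap_node \<times> 'v sap_node \<Rightarrow> real" where
  "sap_cost_aux c p M (Orig v, Orig w) = c {v, w}"
| "sap_cost_aux c p M (Root, Orig t) = M"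
| "sap_cost_aux c p M (Orig t, V0) = 0"
| "sap_cost_aux c p M (Orig t, Copy t') = 0"
| "sap_cost_aux c p M (V0, Copy t) = p t"
| "sap_cost_aux c p M _ = 0"

definition sap_cost ::
  "'v set \<Rightarrow> ('v set \<Rightarrow> real) \<Rightarrow> ('v \<Rightarrow> real) \<Rightarrow> 'v sap_node \<times> 'v sap_node \<Rightarrow> real" where
  "sap_cost V c p = sap_cost_aux c p (bigM V p)"

definition delta_in :: "('n \<times> 'n) set \<Rightarrow> 'n set \<Rightarrow> ('n \<times> 'n) set" where
  "delta_in A U = {a \<in> A. fst a \<notin> U \<and> snd a \<in> U}"

definition admissible_cuts :: "'v set \<Rightarrow> ('v \<Rightarrow> real) \<Rightarrow> 'v sap_node set set" where
  "admissible_cuts V p = {U. U \<subset> sap_nodes V p \<and> Root \<notin> U \<and> U \<inter> sap_terminals V p \<noteq> {}}"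

definition lp_feasible :: "('n \<times> 'n) set \<Rightarrow> 'n set set \<Rightarrow> ('n \<times> 'n \<Rightarrow> real) \<Rightarrow> bool" where
  "lp_feasible A Ucal x \<longleftrightarrow> (\<forall>U\<in>Ucal. sum x (delta_in A U) \<ge> 1) \<and>
     (\<forall>a\<in>A. 0 \<le> x a \<and> x a \<le> 1)"

definition lp_obj :: "('n \<times> 'n) set \<Rightarrow> ('n \<times> 'n \<Rightarrow> real) \<Rightarrow> real \<Rightarrow> ('n \<times> 'n \<Rightarrow> real) \<Rightarrow> real" where
  "lp_obj A cost M x = (\<Sum>a\<in>A. cost a * x a) - M"

definition lp_optimal_value ::
  "('n \<times> 'n) set \<Rightarrow> 'n set set \<Rightarrow> ('n \<times> 'n \<Rightarrow> real) \<Rightarrow> real \<Rightarrow> real \<Rightarrow> bool" where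
  "lp_optimal_value A Ucal cost M L \<longleftrightarrow>
     (\<exists>x. lp_feasible A Ucal x \<and> lp_obj A cost M x = L) \<and>
     (\<forall>x. lp_feasible A Ucal x \<longrightarrow> L \<le> lp_obj A cost M x)"

text \<open>Dual LP: variables pi_U >= 0 for the cut constraints and sigma_a >= 0 for the
  constraints x(a) <= 1.\<close>
definition dual_feasible ::
  "('n \<times> 'n) set \<Rightarrow> 'n set set \<Rightarrow> ('n \<times> 'n \<Rightarrow> real) \<Rightarrow> ('n set \<Rightarrow> real) \<Rightarrow> ('n \<times> 'n \<Rightarrow> real) \<Rightarrow> bool" where
  "dual_feasible A Ucal cost \<pi> \<sigma> \<longleftrightarrow>
     (\<forall>U\<in>Ucal. 0 \<le> \<pi> U) \<and> (\<forall>a\<in>A. 0 \<le> \<sigma> a) \<and>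
     (\<forall>a\<in>A. (\<Sum>U\<in>{U\<in>Ucal. a \<in> delta_in A U}. \<pi> U) - \<sigma> a \<le> cost a)"

definition dual_obj ::
  "('n \<times> 'n) set \<Rightarrow> 'n set set \<Rightarrow> real \<Rightarrow> ('n set \<Rightarrow> real) \<Rightarrow> ('n \<times> 'n \<Rightarrow> real) \<Rightarrow> real" where
  "dual_obj A Ucal M \<pi> \<sigma> = (\<Sum>U\<in>Ucal. \<pi> U) - (\<Sum>a\<in>A. \<sigma> a) - M"

definition dual_optimal ::
  "('n \<times> 'n) set \<Rightarrow> 'n set set \<Rightarrow> ('n \<times> 'n \<Rightarrow> real) \<Rightarrow> real \<Rightarrow> ('n set \<Rightarrow> real) \<Rightarrow> ('n \<times> 'n \<Rightarrow> real) \<Rightarrow> bool" where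
  "dual_optimal A Ucal cost M \<pi> \<sigma> \<longleftrightarrow> dual_feasible A Ucal cost \<pi> \<sigma> \<and>
     (\<forall>\<pi>' \<sigma>'. dual_feasible A Ucal cost \<pi>' \<sigma>' \<longrightarrow> dual_obj A Ucal M \<pi>' \<sigma>' \<le> dual_obj A Ucal M \<pi> \<sigma>)"

definition reduced_cost ::
  "('n \<times> 'n) set \<Rightarrow> 'n set set \<Rightarrow> ('n \<times> 'n \<Rightarrow> real) \<Rightarrow> ('n set \<Rightarrow> real) \<Rightarrow> 'n \<times> 'n \<Rightarrow> real" where
  "reduced_cost A Ucal cost \<pi> a = cost a - (\<Sum>U\<in>{U\<in>Ucal. a \<in> delta_in A U}. \<pi> U)"

end

theory Submission
  imports Defs
begin

definition lin :: "(real \<Rightarrow> 'x \<Rightarrow> 'x \<Rightarrow> 'x) \<Rightarrow> ('x \<Rightarrow> real) \<Rightarrow> bool" where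
  "lin comb f \<longleftrightarrow> (\<forall>s x z. f (comb s x z) = f x - s * f z)"

lemma farkas:
  fixes a :: "'i \<Rightarrow> 'x \<Rightarrow> real" and b :: "'x \<Rightarrow> real"
  assumes "finite I" "\<forall>i\<in>I. lin comb (a i)" "lin comb b"
    "\<forall>x. (\<forall>i\<in>I. a i x \<ge> 0) \<longrightarrow> b x \<ge> 0"
  shows "\<exists>l. (\<forall>i\<in>I. l i \<ge> 0) \<and> (\<forall>x. b x = (\<Sum>i\<in>I. l i * a i x))"
  using assms
proof (induction I arbitrary: a b rule: finite_induct)
  case empty
  have "b x = 0" for x
  proof -
    have "b (comb 2 x x) = - b x" using empty(2) unfolding lin_def by simp
    moreover have "b (comb 2 x x) \<ge> 0" "b x \<ge> 0" using empty(3) by auto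
    ultimately show ?thesis by linarith
  qed
  then show ?case by simp
next
  case (insert k I)
  show ?case
  proof (cases "\<forall>x. (\<forall>i\<in>I. a i x \<ge> 0) \<longrightarrow> b x \<ge> 0")
    case True
    from insert.IH[of a b] insert.prems True obtain l where
      l: "\<forall>i\<in>I. l i \<ge> 0" "\<forall>x. b x = (\<Sum>i\<in>I. l i * a i x)" by auto
    have "(\<Sum>i\<in>I. (l(k:=0)) i * a i x) = (\<Sum>i\<in>I. l i * a i x)" for x
      using insert.hyps(2) by (intro sum.cong) auto
    then show ?thesis using l insert.hyps
      by (intro exI[of _ "l(k:=0)"]) auto
  next
    case False
    then obtain z where z: "\<forall>i\<in>I. a i z \<ge> 0" "b z < 0" by force
    have akz: "a k z < 0"
      using z insert.prems(3) by (metis insert_iff not_le)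
    define a' where "a' i x = a i x - (a i z / a k z) * a k x" for i x
    define b' where "b' x = b x - (b z / a k z) * a k x" for x
    have lk: "lin comb (a k)" using insert.prems(1) by auto
    have la': "\<forall>i\<in>I. lin comb (a' i)"
    proof
      fix i assume i: "i \<in> I"
      have "lin comb (a i)" using insert.prems(1) i by auto
      then show "lin comb (a' i)" using lk unfolding lin_def a'_def
      proof (intro allI)
        fix s x w
        assume h1: "\<forall>s x z. a i (comb s x z) = a i x - s * a i z"
          and h2: "\<forall>s x z. a k (comb s x z) = a k x - s * a k z"
        show "a i (comb s x w) - a i z / a k z * a k (comb s x w) =
          a i x - a i z / a k z * a k x - s * (a i w - a i z / a k z * a k w)"
        proof -
          have e1: "a i (comb s x w) = a i x - s * a i w" using h1 by blast
          have e2: "a k (comb s x w) = a k x - s * a k w" using h2 by blast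
          show ?thesis unfolding e1 e2 by (simp add: algebra_simps diff_divide_distrib)
        qed
      qed
    qed
    have lb': "lin comb b'"
      using insert.prems(2) lk unfolding lin_def b'_def
    proof (intro allI)
      fix s x w
      assume h1: "\<forall>s x z. b (comb s x z) = b x - s * b z"
        and h2: "\<forall>s x z. a k (comb s x z) = a k x - s * a k z"
      show "b (comb s x w) - b z / a k z * a k (comb s x w) =
          b x - b z / a k z * a k x - s * (b w - b z / a k z * a k w)"
      proof -
        have e1: "b (comb s x w) = b x - s * b w" using h1 by blast
        have e2: "a k (comb s x w) = a k x - s * a k w" using h2 by blast
        show ?thesis unfolding e1 e2 by (simp add: algebra_simps diff_divide_distrib)
      qed
    qed
    have hyp: "\<forall>x. (\<forall>i\<in>I. a' i x \<ge> 0) \<longrightarrow> b' x \<ge> 0"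
    proof (intro allI impI)
      fix x assume ax: "\<forall>i\<in>I. a' i x \<ge> 0"
      define y where "y = comb (a k x / a k z) x z"
      have aky: "a k y = 0" using lk akz unfolding lin_def y_def by simp
      have aiy: "a i y = a' i x" if "i \<in> I" for i
        using insert.prems(1) that unfolding lin_def y_def a'_def by auto
      have "b y \<ge> 0" using insert.prems(3) aky aiy ax by auto
      moreover have "b y = b' x"
        using insert.prems(2) unfolding lin_def y_def b'_def by auto
      ultimately show "b' x \<ge> 0" by simp
    qed
    from insert.IH[of a' b'] la' lb' hyp obtain \<mu> where
      mu: "\<forall>i\<in>I. \<mu> i \<ge> 0" "\<forall>x. b' x = (\<Sum>i\<in>I. \<mu> i * a' i x)" by auto
    define lk' where "lk' = (b z - (\<Sum>i\<in>I. \<mu> i * a i z)) / a k z"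
    have "(\<Sum>i\<in>I. \<mu> i * a i z) \<ge> 0" using mu(1) z(1) by (intro sum_nonneg) auto
    hence "b z - (\<Sum>i\<in>I. \<mu> i * a i z) < 0" using z by linarith
    hence lk'pos: "lk' \<ge> 0" unfolding lk'_def using akz by (intro divide_nonpos_neg) auto
    define l where "l = \<mu>(k := lk')"
    have "b x = (\<Sum>i\<in>insert k I. l i * a i x)" for x
    proof -
      have s1: "(\<Sum>i\<in>I. l i * a i x) = (\<Sum>i\<in>I. \<mu> i * a i x)"
        using insert.hyps(2) unfolding l_def by (intro sum.cong) auto
      have "b x = b' x + (b z / a k z) * a k x" unfolding b'_def by simp
      also have "b' x = (\<Sum>i\<in>I. \<mu> i * a i x) - (\<Sum>i\<in>I. \<mu> i * a i z) / a k z * a k x"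
        unfolding mu(2)[rule_format] a'_def
        by (simp add: algebra_simps sum_subtractf sum_distrib_left sum_distrib_right sum_divide_distrib)
      finally have "b x = (\<Sum>i\<in>I. \<mu> i * a i x) + lk' * a k x"
        unfolding lk'_def by (simp add: algebra_simps diff_divide_distrib)
      then show ?thesis using insert.hyps s1 by (simp add: l_def)
    qed
    moreover have "\<forall>i\<in>insert k I. l i \<ge> 0" using mu(1) lk'pos unfolding l_def by auto
    ultimately show ?thesis by blast
  qed
qed


datatype ('u, 'a) idx = IU 'u | IL 'a | IH 'a | IT

lemma idx_sum:
  fixes g :: "('u, 'a) idx \<Rightarrow> real"
  assumes "finite Uc" "finite A"
  shows "(\<Sum>i\<in>IU ` Uc \<union> IL ` A \<union> IH ` A \<union> {IT}. g i) =
    (\<Sum>U\<in>Uc. g (IU U)) + (\<Sum>e\<in>A. g (IL e)) + (\<Sum>e\<in>A. g (IH e)) + g IT"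
proof -
  have "(\<Sum>i\<in>IU ` Uc \<union> IL ` A \<union> IH ` A \<union> {IT}. g i) =
     (\<Sum>i\<in>IU ` Uc \<union> IL ` A \<union> IH ` A. g i) + g IT"
    using assms by (subst sum.union_disjoint) auto
  also have "(\<Sum>i\<in>IU ` Uc \<union> IL ` A \<union> IH ` A. g i) =
     (\<Sum>i\<in>IU ` Uc \<union> IL ` A. g i) + (\<Sum>i\<in>IH ` A. g i)"
    using assms by (subst sum.union_disjoint) auto
  also have "(\<Sum>i\<in>IU ` Uc \<union> IL ` A. g i) = (\<Sum>i\<in>IU ` Uc. g i) + (\<Sum>i\<in>IL ` A. g i)"
    using assms by (subst sum.union_disjoint) auto
  also have "(\<Sum>i\<in>IU ` Uc. g i) = (\<Sum>U\<in>Uc. g (IU U))"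
    by (subst sum.reindex) (auto simp: inj_on_def)
  also have "(\<Sum>i\<in>IL ` A. g i) = (\<Sum>e\<in>A. g (IL e))"
    by (subst sum.reindex) (auto simp: inj_on_def)
  also have "(\<Sum>i\<in>IH ` A. g i) = (\<Sum>e\<in>A. g (IH e))"
    by (subst sum.reindex) (auto simp: inj_on_def)
  finally show ?thesis .
qed

lemma strong_dual:
  fixes A :: "('n \<times> 'n) set" and Ucal :: "'n set set"
  assumes finA: "finite A" and finU: "finite Ucal"
    and L: "lp_optimal_value A Ucal cost M L"
  shows "\<exists>\<pi> \<sigma>. dual_feasible A Ucal cost \<pi> \<sigma> \<and> L \<le> dual_obj A Ucal M \<pi> \<sigma>"
proof -
  obtain xs where xs: "lp_feasible A Ucal xs" "lp_obj A cost M xs = L"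
    and opt: "\<forall>x. lp_feasible A Ucal x \<longrightarrow> L \<le> lp_obj A cost M x"
    using L unfolding lp_optimal_value_def by blast
  define Vs where "Vs = (\<Sum>a\<in>A. cost a * xs a)"
  have LVs: "L = Vs - M" using xs(2) unfolding lp_obj_def Vs_def by simp
  define comb :: "real \<Rightarrow> (('n \<times> 'n \<Rightarrow> real) \<times> real) \<Rightarrow> (('n \<times> 'n \<Rightarrow> real) \<times> real) \<Rightarrow> (('n \<times> 'n \<Rightarrow> real) \<times> real)"
    where "comb s p q = (\<lambda>a. fst p a - s * fst q a, snd p - s * snd q)" for s p q
  define I where "I = IU ` Ucal \<union> IL ` A \<union> IH ` A \<union> {IT}"
  define af :: "('n set, 'n \<times> 'n) idx \<Rightarrow> (('n \<times> 'n \<Rightarrow> real) \<times> real) \<Rightarrow> real" where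
    "af i p = (case i of IU U \<Rightarrow> (\<Sum>a\<in>delta_in A U. fst p a) - snd p
       | IL e \<Rightarrow> fst p e | IH e \<Rightarrow> snd p - fst p e | IT \<Rightarrow> snd p)" for i p
  define bf where "bf p = (\<Sum>a\<in>A. cost a * fst p a) - Vs * snd p" for p
  have finD: "finite (delta_in A U)" for U using finA unfolding delta_in_def by auto
  have lina: "\<forall>i\<in>I. lin comb (af i)"
  proof
    fix i show "lin comb (af i)"
      unfolding lin_def comb_def af_def
      by (cases i) (auto simp: sum_subtractf sum_distrib_left algebra_simps)
  qed
  have linb: "lin comb bf"
    unfolding lin_def comb_def bf_def
    by (auto simp: sum_subtractf sum_distrib_left algebra_simps)
  have hyp: "\<forall>p. (\<forall>i\<in>I. af i p \<ge> 0) \<longrightarrow> bf p \<ge> 0"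
  proof (intro allI impI)
    fix p assume hp: "\<forall>i\<in>I. af i p \<ge> 0"
    obtain x t where p: "p = (x, t)" by force
    have cU: "(\<Sum>a\<in>delta_in A U. x a) \<ge> t" if "U \<in> Ucal" for U
      using hp that unfolding I_def af_def p by force
    have cL: "x e \<ge> 0" if "e \<in> A" for e
      using hp that unfolding I_def af_def p by force
    have cH: "x e \<le> t" if "e \<in> A" for e
      using hp that unfolding I_def af_def p by force
    have cT: "t \<ge> 0" using hp unfolding I_def af_def p by force
    show "bf p \<ge> 0"
    proof (cases "t = 0")
      case True
      then have "x e = 0" if "e \<in> A" for e using cL[OF that] cH[OF that] True by linarith
      then show ?thesis unfolding bf_def p using True by simp
    next
      case False
      with cT have tp: "t > 0" by simp
      define x' where "x' a = x a / t" for a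
      have "lp_feasible A Ucal x'"
        unfolding lp_feasible_def
      proof (intro conjI ballI)
        fix U assume "U \<in> Ucal"
        then have "(\<Sum>a\<in>delta_in A U. x a) / t \<ge> 1" using cU tp by simp
        then show "1 \<le> sum x' (delta_in A U)" unfolding x'_def by (simp add: sum_divide_distrib)
      next
        fix a assume "a \<in> A"
        then show "0 \<le> x' a" "x' a \<le> 1" using cL cH tp unfolding x'_def by auto
      qed
      then have "L \<le> lp_obj A cost M x'" using opt by blast
      then have "Vs \<le> (\<Sum>a\<in>A. cost a * x a) / t"
        unfolding LVs lp_obj_def x'_def by (simp add: sum_divide_distrib)
      then have "Vs * t \<le> (\<Sum>a\<in>A. cost a * x a)" using tp by (simp add: pos_le_divide_eq)
      then show ?thesis unfolding bf_def p by simp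
    qed
  qed
  have finI: "finite I" unfolding I_def using finA finU by auto
  obtain l where l: "\<forall>i\<in>I. l i \<ge> 0" and lb: "\<forall>p. bf p = (\<Sum>i\<in>I. l i * af i p)"
    using farkas[OF finI lina linb hyp] by blast
  define \<pi> where "\<pi> U = l (IU U)" for U
  define \<sigma> where "\<sigma> e = l (IH e)" for e
  have split: "(\<Sum>i\<in>I. l i * af i p) =
    (\<Sum>U\<in>Ucal. \<pi> U * af (IU U) p) + (\<Sum>e\<in>A. l (IL e) * af (IL e) p)
     + (\<Sum>e\<in>A. \<sigma> e * af (IH e) p) + l IT * af IT p" for p
    unfolding I_def \<pi>_def \<sigma>_def by (rule idx_sum[OF finU finA])
  have feas: "dual_feasible A Ucal cost \<pi> \<sigma>"
    unfolding dual_feasible_def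
  proof (intro conjI ballI)
    fix U assume "U \<in> Ucal" then show "0 \<le> \<pi> U" using l unfolding I_def \<pi>_def by auto
  next
    fix e assume "e \<in> A" then show "0 \<le> \<sigma> e" using l unfolding I_def \<sigma>_def by auto
  next
    fix e assume e: "e \<in> A"
    define p where "p = ((\<lambda>a. if a = e then 1 else 0) :: 'n \<times> 'n \<Rightarrow> real, 0::real)"
    have "bf p = cost e" unfolding bf_def p_def using finA e by (simp add: if_distrib cong: if_cong)
    moreover have "(\<Sum>U\<in>Ucal. \<pi> U * af (IU U) p) = (\<Sum>U\<in>{U \<in> Ucal. e \<in> delta_in A U}. \<pi> U)"
    proof -
      have "af (IU U) p = (if e \<in> delta_in A U then 1 else 0)" for U
        unfolding af_def p_def using finD[of U] by (simp add: sum.delta')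
      then have "(\<Sum>U\<in>Ucal. \<pi> U * af (IU U) p) = (\<Sum>U\<in>Ucal. if e \<in> delta_in A U then \<pi> U else 0)"
        by (intro sum.cong) auto
      then show ?thesis using finU by (simp add: sum.inter_filter)
    qed
    moreover have "(\<Sum>f\<in>A. l (IL f) * af (IL f) p) = l (IL e)"
      unfolding af_def p_def using finA e by (simp add: if_distrib cong: if_cong)
    moreover have "(\<Sum>f\<in>A. \<sigma> f * af (IH f) p) = - \<sigma> e"
      unfolding af_def p_def using finA e by (simp add: if_distrib sum_negf cong: if_cong)
    moreover have "af IT p = 0" unfolding af_def p_def by simp
    moreover have "l (IL e) \<ge> 0" using l e unfolding I_def by auto
    ultimately show "(\<Sum>U\<in>{U \<in> Ucal. e \<in> delta_in A U}. \<pi> U) - \<sigma> e \<le> cost e"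
      using lb split[of p] by simp
  qed
  define p where "p = ((\<lambda>a. 0) :: 'n \<times> 'n \<Rightarrow> real, 1::real)"
  have "bf p = - Vs" unfolding bf_def p_def by simp
  moreover have "(\<Sum>U\<in>Ucal. \<pi> U * af (IU U) p) = - (\<Sum>U\<in>Ucal. \<pi> U)"
    unfolding af_def p_def by (simp add: sum_negf)
  moreover have "(\<Sum>f\<in>A. l (IL f) * af (IL f) p) = 0" unfolding af_def p_def by simp
  moreover have "(\<Sum>f\<in>A. \<sigma> f * af (IH f) p) = (\<Sum>f\<in>A. \<sigma> f)" unfolding af_def p_def by simp
  moreover have "af IT p = 1" unfolding af_def p_def by simp
  moreover have "l IT \<ge> 0" using l unfolding I_def by auto
  ultimately have "Vs \<le> (\<Sum>U\<in>Ucal. \<pi> U) - (\<Sum>f\<in>A. \<sigma> f)"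
    using lb split[of p] by simp
  then have "L \<le> dual_obj A Ucal M \<pi> \<sigma>" unfolding dual_obj_def LVs by simp
  with feas show ?thesis by blast
qed


lemma cut_entry:
  assumes "(u, w) \<in> X\<^sup>*" "u \<notin> U" "w \<in> U"
  shows "\<exists>a\<in>X. fst a \<notin> U \<and> snd a \<in> U"
  using assms
proof (induction rule: rtrancl_induct)
  case base then show ?case by simp
next
  case (step y z)
  show ?case
  proof (cases "y \<in> U")
    case True then show ?thesis using step by blast
  next
    case False then show ?thesis using step by force
  qed
qed

lemma orientation:
  assumes conn: "\<forall>w\<in>VS. (r, w) \<in> (adj ES)\<^sup>*"
  shows "\<exists>Or. Or \<subseteq> {(v, w). {v, w} \<in> ES} \<and> inj_on (\<lambda>(v, w). {v, w}) Or \<and>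
     (\<forall>w\<in>VS. (r, w) \<in> Or\<^sup>*)"
proof -
  define d where "d w = (LEAST n. (r, w) \<in> (adj ES) ^^ n)" for w
  define Or where "Or = {(v, w). {v, w} \<in> ES \<and> d w = Suc (d v)}"
  have key: "\<forall>w. d w = n \<longrightarrow> (\<exists>k. (r, w) \<in> (adj ES) ^^ k) \<longrightarrow> (r, w) \<in> Or\<^sup>*" for n
  proof (induction n)
    case 0
    show ?case
    proof (intro allI impI)
      fix w assume "d w = 0" "\<exists>k. (r, w) \<in> adj ES ^^ k"
      then have "(r, w) \<in> adj ES ^^ 0" unfolding d_def by (metis LeastI_ex)
      then show "(r, w) \<in> Or\<^sup>*" by simp
    qed
  next
    case (Suc m)
    show ?case
    proof (intro allI impI)
      fix w assume dw: "d w = Suc m" and ex: "\<exists>k. (r, w) \<in> adj ES ^^ k"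
      then have "(r, w) \<in> adj ES ^^ Suc m" unfolding d_def by (metis LeastI_ex)
      then obtain v where rv: "(r, v) \<in> adj ES ^^ m" and vw: "(v, w) \<in> adj ES" by auto
      have "d v \<le> m" unfolding d_def using rv by (rule Least_le)
      have "(r, v) \<in> adj ES ^^ d v" unfolding d_def using rv by (metis LeastI_ex)
      then have "(r, w) \<in> adj ES ^^ Suc (d v)" using vw by auto
      then have "d w \<le> Suc (d v)" unfolding d_def by (rule Least_le)
      with dw \<open>d v \<le> m\<close> have dv: "d v = m" by simp
      have "(v, w) \<in> Or" using vw dv dw unfolding Or_def adj_def by simp
      moreover have "(r, v) \<in> Or\<^sup>*" using Suc.IH dv rv by blast
      ultimately show "(r, w) \<in> Or\<^sup>*" by simp
    qed
  qed
  have "Or \<subseteq> {(v, w). {v, w} \<in> ES}" unfolding Or_def by auto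
  moreover have "inj_on (\<lambda>(v, w). {v, w}) Or"
  proof (rule inj_onI)
    fix p q assume p: "p \<in> Or" and q: "q \<in> Or" and eq: "(\<lambda>(v, w). {v, w}) p = (\<lambda>(v, w). {v, w}) q"
    obtain a b where pab: "p = (a, b)" by force
    obtain c e where qce: "q = (c, e)" by force
    from eq have "{a, b} = {c, e}" unfolding pab qce by simp
    then have "(a = c \<and> b = e) \<or> (a = e \<and> b = c)" by (metis doubleton_eq_iff)
    then show "p = q" using p q unfolding pab qce Or_def by auto
  qed
  moreover have "\<forall>w\<in>VS. (r, w) \<in> Or\<^sup>*"
    using key conn by (metis rtrancl_power)
  ultimately show ?thesis by blast
qed


lemma sum_Un_le_nonneg:
  fixes f :: "'a \<Rightarrow> real"
  assumes "finite S" "finite T" "\<forall>x\<in>S \<union> T. f x \<ge> 0"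
  shows "sum f (S \<union> T) \<le> sum f S + sum f T"
proof -
  have "sum f (S \<union> T) = sum f S + sum f T - sum f (S \<inter> T)"
    using assms by (simp add: sum_Un)
  moreover have "sum f (S \<inter> T) \<ge> 0" using assms by (intro sum_nonneg) auto
  ultimately show ?thesis by simp
qed

lemma map_rtrancl:
  assumes "(u, w) \<in> R\<^sup>*" "\<forall>(a, b)\<in>R. (f a, f b) \<in> X"
  shows "(f u, f w) \<in> X\<^sup>*"
  using assms
proof (induction rule: rtrancl_induct)
  case base then show ?case by simp
next
  case (step y z)
  then have "(f y, f z) \<in> X" by auto
  with step show ?case by (meson rtrancl.rtrancl_into_rtrancl)
qed

theorem proposition6:
  fixes V :: "'v set" and E :: "'v set set" and c :: "'v set \<Rightarrow> real" and p :: "'v \<Rightarrow> real"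
    and Ucal :: "'v sap_node set set" and L :: real
    and \<pi> :: "'v sap_node set \<Rightarrow> real" and B :: real and ti :: 'v and Tbar :: "'v set"
  assumes inst: "pcstp_instance V E c p"
    and Ucal: "Ucal \<subseteq> admissible_cuts V p"
    and L: "lp_optimal_value (sap_arcs V E p) Ucal (sap_cost V c p) (bigM V p) L"
    and dual: "\<exists>\<sigma>. dual_optimal (sap_arcs V E p) Ucal (sap_cost V c p) (bigM V p) \<pi> \<sigma>"
    and B: "\<forall>VS ES. pcst_optimal V E c p VS ES \<longrightarrow> pcst_cost V c p VS ES \<le> B"
    and ti: "ti \<in> Tp V p"
    and Tbar: "Tbar \<subseteq> Tp V p"
    and Tbar_impl: "\<forall>VS ES. pcst_optimal V E c p VS ES \<longrightarrow> VS \<inter> Tbar \<noteq> {} \<longrightarrow> ti \<in> VS"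
    and gap: "(\<Sum>t\<in>Tbar. reduced_cost (sap_arcs V E p) Ucal (sap_cost V c p) \<pi> (V0, Copy t)) + L > B"
  shows "\<forall>VS ES. pcst_optimal V E c p VS ES \<longrightarrow> ti \<in> VS"
proof (intro allI impI)
  fix VS ES assume opt: "pcst_optimal V E c p VS ES"
  show "ti \<in> VS"
  proof (rule ccontr)
    assume tiS: "ti \<notin> VS"
    define A where "A = sap_arcs V E p"
    define cst where "cst = sap_cost V c p"
    define M where "M = bigM V p"
    define T where "T = Tp V p"
    have finV: "finite V" and edges: "\<forall>e\<in>E. \<exists>v w. v \<in> V \<and> w \<in> V \<and> v \<noteq> w \<and> e = {v, w}"
      and cpos: "\<forall>e\<in>E. c e > 0" and pnn: "\<forall>v\<in>V. p v \<ge> 0"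
      using inst unfolding pcstp_instance_def by auto
    have tree: "is_tree V E VS ES" using opt unfolding pcst_optimal_def by simp
    then have VSV: "VS \<subseteq> V" and ESE: "ES \<subseteq> E" and conn: "connected_sub VS ES"
      unfolding is_tree_def by auto
    have EPow: "E \<subseteq> Pow V" using edges by auto
    have finE: "finite E" using finite_subset[OF EPow] finV by auto
    have finES: "finite ES" using finite_subset[OF ESE finE] .
    have TV: "T \<subseteq> V" unfolding T_def Tp_def by auto
    have finT: "finite T" using finite_subset[OF TV finV] .
    have finN: "finite (sap_nodes V p)" unfolding sap_nodes_def using finV finT T_def by auto
    have "A \<subseteq> sap_nodes V p \<times> sap_nodes V p"
    proof
      fix a assume "a \<in> A"
      then show "a \<in> sap_nodes V p \<times> sap_nodes V p"
        unfolding A_def sap_arcs_def sap_nodes_def Tp_def using EPow by blast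
    qed
    then have finA: "finite A" using finN by (meson finite_SigmaI finite_subset)
    have "Ucal \<subseteq> Pow (sap_nodes V p)" using Ucal unfolding admissible_cuts_def by auto
    then have finU: "finite Ucal" using finN by (meson finite_Pow_iff finite_subset)
    obtain \<sigma> where dopt: "dual_optimal A Ucal cst M \<pi> \<sigma>"
      using dual unfolding A_def cst_def M_def by blast
    obtain \<pi>' \<sigma>' where "dual_feasible A Ucal cst \<pi>' \<sigma>'" "L \<le> dual_obj A Ucal M \<pi>' \<sigma>'"
      using strong_dual[OF finA finU] L unfolding A_def cst_def M_def by blast
    then have LD: "L \<le> dual_obj A Ucal M \<pi> \<sigma>" using dopt unfolding dual_optimal_def by force
    have dfeas: "dual_feasible A Ucal cst \<pi> \<sigma>" using dopt unfolding dual_optimal_def by simp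
    have pinn: "\<forall>U\<in>Ucal. \<pi> U \<ge> 0" and signn: "\<forall>a\<in>A. \<sigma> a \<ge> 0"
      and redge: "\<forall>a\<in>A. (\<Sum>U\<in>{U\<in>Ucal. a \<in> delta_in A U}. \<pi> U) - \<sigma> a \<le> cst a"
      using dfeas unfolding dual_feasible_def by auto
    have MT: "M = (\<Sum>t\<in>T. p t)" unfolding M_def bigM_def T_def by simp
    have sumV: "(\<Sum>v\<in>V. p v) = M"
      unfolding MT using TV finV pnn
      by (intro sum.mono_neutral_right) (auto simp: T_def Tp_def)
    obtain r where r: "r \<in> VS" "r \<in> T"
    proof (rule ccontr)
      assume "\<not> thesis"
      with that have none: "VS \<inter> T = {}" by blast
      have "(\<Sum>t\<in>T. p t) \<le> (\<Sum>v\<in>V - VS. p v)"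
        using none TV finV pnn by (intro sum_mono2) auto
      moreover have "(\<Sum>e\<in>ES. c e) \<ge> 0" using ESE cpos by (intro sum_nonneg) (auto simp: less_imp_le)
      ultimately have c1: "pcst_cost V c p VS ES \<ge> M" unfolding pcst_cost_def MT by linarith
      have tiV: "ti \<in> V" using ti unfolding Tp_def by simp
      have "is_tree V E {ti} {}"
        unfolding is_tree_def connected_sub_def has_cycle_def using tiV by (auto intro: exI[of _ 0])
      then have "pcst_cost V c p VS ES \<le> pcst_cost V c p {ti} {}" using opt unfolding pcst_optimal_def by blast
      also have "\<dots> = (\<Sum>v\<in>V - {ti}. p v)" unfolding pcst_cost_def by simp
      also have "\<dots> = M - p ti" using sumV finV tiV by (simp add: sum_diff1)
      finally show False using c1 ti unfolding Tp_def by simp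
    qed
    have connr: "\<forall>w\<in>VS. (r, w) \<in> (adj ES)\<^sup>*" using conn r unfolding connected_sub_def by auto
    obtain Or where Or: "Or \<subseteq> {(v, w). {v, w} \<in> ES}" "inj_on (\<lambda>(v, w). {v, w}) Or"
      "\<forall>w\<in>VS. (r, w) \<in> Or\<^sup>*"
      using orientation[OF connr] by blast
    have finOr: "finite Or"
    proof -
      have eVS: "\<forall>e\<in>ES. e \<subseteq> VS" using tree unfolding is_tree_def by auto
      have "Or \<subseteq> VS \<times> VS"
      proof
        fix q assume "q \<in> Or"
        then obtain a b where "q = (a, b)" "{a, b} \<in> ES" using Or(1) by auto
        then show "q \<in> VS \<times> VS" using eVS by auto
      qed
      moreover have "finite VS" using VSV finV finite_subset by auto
      ultimately show ?thesis by (meson finite_SigmaI finite_subset)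
    qed
    define O' where "O' = (\<lambda>(v, w). (Orig v, Orig w)) ` Or"
    define C1 where "C1 = (\<lambda>t. (Orig t, Copy t)) ` (VS \<inter> T)"
    define C2 where "C2 = (\<lambda>t. (V0 :: 'v sap_node, Copy t)) ` (T - VS)"
    define X where "X = {(Root, Orig r), (Orig r, V0)} \<union> O' \<union> C1 \<union> C2"
    have finX: "finite X" unfolding X_def O'_def C1_def C2_def using finOr finT by auto
    have XA: "X \<subseteq> A"
      unfolding X_def O'_def C1_def C2_def A_def sap_arcs_def using r Or(1) ESE T_def by auto
    have reachO: "(Orig r, Orig w) \<in> X\<^sup>*" if "w \<in> VS" for w
    proof -
      have "\<forall>(a, b)\<in>Or. (Orig a, Orig b) \<in> X" unfolding X_def O'_def by auto
      then show ?thesis using map_rtrancl[of r w Or Orig X] Or(3) that by blast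
    qed
    have reach: "(Root, Copy t) \<in> X\<^sup>*" if "t \<in> T" for t
    proof (cases "t \<in> VS")
      case True
      have "(Root, Orig r) \<in> X" unfolding X_def by simp
      moreover have "(Orig t, Copy t) \<in> X" unfolding X_def C1_def using True that by auto
      ultimately show ?thesis using reachO[OF True]
        by (meson converse_rtrancl_into_rtrancl rtrancl.rtrancl_into_rtrancl)
    next
      case False
      have "(Root, Orig r) \<in> X" "(Orig r, V0) \<in> X" unfolding X_def by simp_all
      moreover have "(V0, Copy t) \<in> X" unfolding X_def C2_def using False that by auto
      ultimately show ?thesis by (meson converse_rtrancl_into_rtrancl r_into_rtrancl)
    qed
    have cut: "X \<inter> delta_in A U \<noteq> {}" if "U \<in> Ucal" for U
    proof -
      from that Ucal have "Root \<notin> U" "U \<inter> sap_terminals V p \<noteq> {}"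
        unfolding admissible_cuts_def by auto
      then obtain t where t: "t \<in> T" "Copy t \<in> U" unfolding sap_terminals_def T_def by auto
      obtain a where "a \<in> X" "fst a \<notin> U" "snd a \<in> U"
        using cut_entry[OF reach[OF t(1)] \<open>Root \<notin> U\<close> t(2)] by blast
      then show ?thesis using XA unfolding delta_in_def by auto
    qed
    define cred where "cred a = reduced_cost A Ucal cst \<pi> a" for a
    have cst_split: "(\<Sum>a\<in>X. cst a) = (\<Sum>a\<in>X. cred a) + (\<Sum>a\<in>X. \<Sum>U\<in>{U\<in>Ucal. a \<in> delta_in A U}. \<pi> U)"
      unfolding cred_def reduced_cost_def by (simp add: sum_subtractf)
    have "(\<Sum>a\<in>X. \<Sum>U\<in>{U\<in>Ucal. a \<in> delta_in A U}. \<pi> U) = (\<Sum>U\<in>Ucal. \<Sum>a\<in>{a\<in>X. a \<in> delta_in A U}. \<pi> U)"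
      using finX finU by (rule sum.swap_restrict)
    also have "\<dots> \<ge> (\<Sum>U\<in>Ucal. \<pi> U)"
    proof (rule sum_mono)
      fix U assume U: "U \<in> Ucal"
      have "{a\<in>X. a \<in> delta_in A U} \<noteq> {}" using cut[OF U] by auto
      moreover have "finite {a\<in>X. a \<in> delta_in A U}" using finX by auto
      ultimately have "card {a\<in>X. a \<in> delta_in A U} \<ge> 1" by (simp add: Suc_leI card_gt_0_iff)
      then show "\<pi> U \<le> (\<Sum>a\<in>{a\<in>X. a \<in> delta_in A U}. \<pi> U)"
      proof -
        have pu: "\<pi> U \<ge> 0" using pinn U by auto
        have "real (card {a\<in>X. a \<in> delta_in A U}) \<ge> 1" using \<open>card _ \<ge> 1\<close> by simp
        then have "\<pi> U \<le> real (card {a\<in>X. a \<in> delta_in A U}) * \<pi> U"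
          using pu mult_right_mono[of 1 _ "\<pi> U"] by simp
        then show ?thesis by simp
      qed
    qed
    finally have pisum: "(\<Sum>a\<in>X. \<Sum>U\<in>{U\<in>Ucal. a \<in> delta_in A U}. \<pi> U) \<ge> (\<Sum>U\<in>Ucal. \<pi> U)" .
    define Y where "Y = (\<lambda>t. (V0 :: 'v sap_node, Copy t)) ` Tbar"
    have Tbar_VS: "Tbar \<inter> VS = {}" using Tbar_impl opt tiS by blast
    have YX: "Y \<subseteq> X" unfolding Y_def X_def C2_def using Tbar Tbar_VS T_def by auto
    have "(\<Sum>a\<in>X. cred a) = (\<Sum>a\<in>Y. cred a) + (\<Sum>a\<in>X - Y. cred a)"
      using finX YX by (metis add.commute sum.subset_diff)
    moreover have "(\<Sum>a\<in>Y. cred a) = (\<Sum>t\<in>Tbar. cred (V0, Copy t))"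
      unfolding Y_def by (subst sum.reindex) (auto simp: inj_on_def)
    moreover have "(\<Sum>a\<in>X - Y. cred a) \<ge> - (\<Sum>a\<in>A. \<sigma> a)"
    proof -
      have "(\<Sum>a\<in>X - Y. cred a) \<ge> (\<Sum>a\<in>X - Y. - \<sigma> a)"
        using XA redge unfolding cred_def reduced_cost_def by (intro sum_mono) force
      moreover have "(\<Sum>a\<in>X - Y. \<sigma> a) \<le> (\<Sum>a\<in>A. \<sigma> a)"
        using XA signn finA by (intro sum_mono2) auto
      ultimately show ?thesis by (simp add: sum_negf)
    qed
    ultimately have credX: "(\<Sum>a\<in>X. cred a) \<ge> (\<Sum>t\<in>Tbar. cred (V0, Copy t)) - (\<Sum>a\<in>A. \<sigma> a)"
      by linarith
    have lower: "(\<Sum>a\<in>X. cst a) - M \<ge> (\<Sum>t\<in>Tbar. cred (V0, Copy t)) + L"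
      using cst_split pisum credX LD unfolding dual_obj_def by linarith
    have cstnn: "\<forall>a\<in>X. cst a \<ge> 0"
    proof
      fix a assume "a \<in> X"
      have "M \<ge> 0" unfolding MT T_def Tp_def by (intro sum_nonneg) auto
      moreover have "c e \<ge> 0" if "e \<in> ES" for e using cpos ESE that by (auto simp: less_imp_le)
      ultimately show "cst a \<ge> 0" using \<open>a \<in> X\<close> Or(1) pnn TV
        unfolding X_def O'_def C1_def C2_def cst_def sap_cost_def M_def by auto
    qed
    have "(\<Sum>a\<in>X. cst a) \<le> (\<Sum>a\<in>{(Root, Orig r), (Orig r, V0)}. cst a) + (\<Sum>a\<in>O'. cst a)
        + (\<Sum>a\<in>C1. cst a) + (\<Sum>a\<in>C2. cst a)"
    proof -
      have f: "finite O'" "finite C1" "finite C2"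
        unfolding O'_def C1_def C2_def using finOr finT by auto
      have "(\<Sum>a\<in>X. cst a) \<le> (\<Sum>a\<in>{(Root, Orig r), (Orig r, V0)} \<union> O' \<union> C1. cst a) + (\<Sum>a\<in>C2. cst a)"
        unfolding X_def using f cstnn by (intro sum_Un_le_nonneg) (auto simp: X_def)
      also have "(\<Sum>a\<in>{(Root, Orig r), (Orig r, V0)} \<union> O' \<union> C1. cst a) \<le>
          (\<Sum>a\<in>{(Root, Orig r), (Orig r, V0)} \<union> O'. cst a) + (\<Sum>a\<in>C1. cst a)"
        using f cstnn by (intro sum_Un_le_nonneg) (auto simp: X_def)
      also have "(\<Sum>a\<in>{(Root, Orig r), (Orig r, V0)} \<union> O'. cst a) \<le>
          (\<Sum>a\<in>{(Root, Orig r), (Orig r, V0)}. cst a) + (\<Sum>a\<in>O'. cst a)"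
        using f cstnn by (intro sum_Un_le_nonneg) (auto simp: X_def)
      finally show ?thesis by linarith
    qed
    moreover have "(\<Sum>a\<in>{(Root, Orig r), (Orig r, V0)}. cst a) = M"
      unfolding cst_def sap_cost_def M_def by simp
    moreover have "(\<Sum>a\<in>C1. cst a) = 0"
      unfolding C1_def cst_def sap_cost_def by (intro sum.neutral) auto
    moreover have "(\<Sum>a\<in>C2. cst a) \<le> (\<Sum>v\<in>V - VS. p v)"
    proof -
      have "(\<Sum>a\<in>C2. cst a) = (\<Sum>t\<in>T - VS. p t)"
        unfolding C2_def cst_def sap_cost_def by (subst sum.reindex) (auto simp: inj_on_def)
      also have "\<dots> \<le> (\<Sum>v\<in>V - VS. p v)" using TV finV pnn by (intro sum_mono2) auto
      finally show ?thesis .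
    qed
    moreover have "(\<Sum>a\<in>O'. cst a) \<le> (\<Sum>e\<in>ES. c e)"
    proof -
      have "(\<Sum>a\<in>O'. cst a) = (\<Sum>q\<in>Or. cst ((\<lambda>(v, w). (Orig v, Orig w)) q))"
        unfolding O'_def by (subst sum.reindex) (auto simp: inj_on_def)
      also have "\<dots> = (\<Sum>q\<in>Or. c ((\<lambda>(v, w). {v, w}) q))"
        unfolding cst_def sap_cost_def by (intro sum.cong) auto
      also have "\<dots> = (\<Sum>e\<in>(\<lambda>(v, w). {v, w}) ` Or. c e)"
        using Or(2) by (subst sum.reindex) auto
      also have "\<dots> \<le> (\<Sum>e\<in>ES. c e)"
        using Or(1) finES cpos ESE by (intro sum_mono2) (auto simp: less_imp_le)
      finally show ?thesis .
    qed
    ultimately have upper: "(\<Sum>a\<in>X. cst a) - M \<le> pcst_cost V c p VS ES"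
      unfolding pcst_cost_def by linarith
    have "pcst_cost V c p VS ES \<le> B" using B opt by blast
    then show False using lower upper gap unfolding cred_def A_def cst_def by linarith
  qed
qed

end
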